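(* Let $g:\mathbb{R}\to\mathbb{R}$ with $g(0)=0$ satisfy: (C1) $|g(x)|\le c+d|x|$ for all $x$, for some constants $c,d\ge0$; (C2) $g(x)<0$ for $x<0$ and $g(x)>0$ for $x>0$; (C3) $\inf_{\delta_1\le|x|\le\delta_2}|g(x)|>0$ for every $0<\delta_1<\delta_2<\infty$. Let $\{\mathcal{F}_n\}_{n\ge0}$ be a filtration, $X_0$ an integrable $\mathcal{F}_0$-measurable random variable, and $X_n=X_{n-1}-\alpha_nU_n$, $n\ge1$, where each $U_n$ is integrable and $\mathcal{F}_n$-measurable, and the constants $\alpha_n$ satisfy $\alpha_n\ge0$, $\alpha_n\to0$, $\sum_n\alpha_n=\infty$. Assume $E[U_n\mid\mathcal{F}_{n-1}]=g(X_{n-1})$ a.e. for $n\ge1$, and that the series $\sum_{i\ge1}\alpha_i\{U_i-E[U_i\mid\mathcal{F}_{i-1}]\}$ converges a.e. Then $X_n\to0$ a.e. *)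

theory Defs
  imports "HOL-Probability.Probability"
begin

end

theory Submission
  imports Defs
begin


lemma det_lemma:
  fixes y s b :: "nat \<Rightarrow> real" and g :: "real \<Rightarrow> real" and c d :: real
  assumes cd: "c \<ge> 0" "d \<ge> 0" and gb: "\<And>x. \<bar>g x\<bar> \<le> c + d * \<bar>x\<bar>"
    and C2: "\<forall>x. (x < 0 \<longrightarrow> g x < 0) \<and> (x > 0 \<longrightarrow> g x > 0)"
    and C3: "\<forall>\<delta>1 \<delta>2. 0 < \<delta>1 \<longrightarrow> \<delta>1 < \<delta>2 \<longrightarrow>
               (INF x\<in>{x. \<delta>1 \<le> \<bar>x\<bar> \<and> \<bar>x\<bar> \<le> \<delta>2}. \<bar>g x\<bar>) > 0"
    and rec: "\<And>n. y (Suc n) = y n - b n * g (y n + s n)"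
    and s0: "s \<longlonglongrightarrow> 0" and b0: "b \<longlonglongrightarrow> 0" and bpos: "\<And>n. b n \<ge> 0"
    and bdiv: "\<not> summable b"
  shows "y \<longlonglongrightarrow> 0"
proof -
  have main: "\<exists>M. \<forall>n\<ge>M. \<bar>y n\<bar> \<le> \<epsilon>" if "\<epsilon> > 0" for \<epsilon> :: real
  proof -
    define \<eta> where "\<eta> = \<epsilon>/2"
    have "\<forall>\<^sub>F n in sequentially. \<bar>s n\<bar> < \<eta>"
    proof -
      obtain no where "\<forall>n\<ge>no. \<bar>s n\<bar> < \<epsilon>/2" using s0 \<open>\<epsilon>>0\<close> unfolding LIMSEQ_iff
        by (metis diff_zero half_gt_zero real_norm_def)
      then show ?thesis unfolding \<eta>_def eventually_sequentially by blast
    qed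
    moreover have "\<forall>\<^sub>F n in sequentially. b n * d \<le> 1"
    proof -
      have "(\<lambda>n. b n * d) \<longlonglongrightarrow> 0" using b0 by (auto intro: tendsto_mult_left_zero)
      from order_tendstoD(2)[OF this, of 1] show ?thesis by (auto elim: eventually_mono)
    qed
    moreover have "\<forall>\<^sub>F n in sequentially. b n * (c + 2*d*\<eta>) \<le> \<epsilon>/2"
    proof -
      have "(\<lambda>n. b n * (c + 2*d*\<eta>)) \<longlonglongrightarrow> 0" using b0 by (auto intro: tendsto_mult_left_zero)
      from order_tendstoD(2)[OF this, of "\<epsilon>/2"] \<open>\<epsilon>>0\<close> show ?thesis by (auto elim: eventually_mono)
    qed
    ultimately obtain N where N: "\<And>n. n \<ge> N \<Longrightarrow> \<bar>s n\<bar> < \<eta> \<and> b n * d \<le> 1 \<and> b n * (c + 2*d*\<eta>) \<le> \<epsilon>/2"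
      unfolding eventually_sequentially by (metis (no_types, lifting) eventually_conj eventually_sequentially)
    have eta: "\<eta> > 0" "\<epsilon> = 2*\<eta>" using \<open>\<epsilon>>0\<close> by (auto simp: \<eta>_def)
    have pos: "y (Suc n) \<ge> -\<epsilon>/2 \<and> g (y n + s n) > 0" if "n \<ge> N" "y n > \<eta>" for n
    proof -
      note Nn = N[OF that(1)]
      have p: "y n + s n > 0" using Nn that by auto
      hence gp: "g (y n + s n) > 0" using C2 by auto
      have "g (y n + s n) \<le> c + d * (y n + s n)" using gb[of "y n + s n"] p by auto
      also have "\<dots> \<le> c + d * y n + d * \<eta>" using mult_left_mono[of "s n" \<eta> d] Nn cd by (auto simp: algebra_simps)
      finally have gl: "g (y n + s n) \<le> c + d * y n + d * \<eta>" .
      have "b n * g (y n + s n) \<le> b n * (c + d * y n + d * \<eta>)" using gl bpos by (simp add: mult_left_mono)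
      moreover have "b n * d * y n \<le> y n" using Nn that eta by (simp add: mult_left_le_one_le mult_le_cancel_right1 mult.commute)
      moreover have "b n * d * \<eta> \<ge> 0" using bpos cd eta by simp
      ultimately have "y (Suc n) \<ge> - b n * (c + 2*d*\<eta>)" unfolding rec by (simp add: algebra_simps)
      with Nn gp show ?thesis by auto
    qed
    have neg: "y (Suc n) \<le> \<epsilon>/2 \<and> g (y n + s n) < 0" if "n \<ge> N" "y n < -\<eta>" for n
    proof -
      note Nn = N[OF that(1)]
      have p: "y n + s n < 0" using Nn that by auto
      hence gp: "g (y n + s n) < 0" using C2 by auto
      have "- g (y n + s n) \<le> c + d * (- y n - s n)" using gb[of "y n + s n"] p by auto
      also have "\<dots> \<le> c + d * (- y n) + d * \<eta>" using mult_left_mono[of "- s n" \<eta> d] Nn cd by (simp add: algebra_simps abs_less_iff)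
      finally have gl: "- g (y n + s n) \<le> c + d * (- y n) + d * \<eta>" .
      have "b n * (- g (y n + s n)) \<le> b n * (c + d * (- y n) + d * \<eta>)" using gl bpos[of n] by (rule mult_left_mono)
      moreover have "b n * d * (- y n) \<le> - y n" using Nn that eta by (simp add: mult_left_le_one_le mult_le_cancel_right1 mult.commute)
      moreover have "b n * d * \<eta> \<ge> 0" using bpos cd eta by simp
      ultimately have "y (Suc n) \<le> b n * (c + 2*d*\<eta>)" unfolding rec by (simp add: algebra_simps)
      with Nn gp show ?thesis by auto
    qed
    have mid: "\<bar>y (Suc n)\<bar> \<le> \<epsilon>" if "n \<ge> N" "\<bar>y n\<bar> \<le> \<eta>" for n
    proof -
      note Nn = N[OF that(1)]
      have "\<bar>g (y n + s n)\<bar> \<le> c + d * \<bar>y n + s n\<bar>" by (rule gb)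
      also have "\<dots> \<le> c + d * (2*\<eta>)" using Nn that cd by (intro add_left_mono mult_left_mono) auto
      finally have "b n * \<bar>g (y n + s n)\<bar> \<le> b n * (c + 2*d*\<eta>)" using bpos by (simp add: mult_left_mono)
      hence "\<bar>b n * g (y n + s n)\<bar> \<le> \<epsilon>/2" using Nn bpos by (simp add: abs_mult)
      thus ?thesis unfolding rec using that eta by linarith
    qed
    have stp: "\<bar>y (Suc n)\<bar> \<le> max \<bar>y n\<bar> \<epsilon>" if "n \<ge> N" for n
    proof (cases "y n > \<eta>")
      case True
      have h: "0 \<le> b n * g (y n + s n)" using pos[OF that True] bpos[of n] by simp
      have "y (Suc n) \<le> y n" "y (Suc n) \<ge> -\<epsilon>/2" using h pos[OF that True] unfolding rec by auto
      hence "\<bar>y (Suc n)\<bar> \<le> \<bar>y n\<bar>" using True eta by (simp add: abs_le_iff)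
      thus ?thesis by simp
    next
      case False
      show ?thesis
      proof (cases "y n < -\<eta>")
        case True
        have h: "b n * g (y n + s n) \<le> 0" using neg[OF that True] bpos[of n] by (simp add: mult_nonneg_nonpos)
        have "y (Suc n) \<ge> y n" "y (Suc n) \<le> \<epsilon>/2" using h neg[OF that True] unfolding rec by auto
        hence "\<bar>y (Suc n)\<bar> \<le> \<bar>y n\<bar>" using True eta by (simp add: abs_le_iff)
        thus ?thesis by simp
      next
        case False
        have "\<bar>y n\<bar> \<le> \<eta>" using False \<open>\<not> y n > \<eta>\<close> by (simp add: abs_le_iff)
        with mid[OF that] show ?thesis by (simp add: le_max_iff_disj)
      qed
    qed
    have bound: "\<bar>y n\<bar> \<le> max \<bar>y N\<bar> \<epsilon>" if "n \<ge> N" for n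
      using that
    proof (induction n rule: dec_induct)
      case base then show ?case by simp
    next
      case (step n) then show ?case using stp[of n] by auto
    qed
    have absorb: "\<bar>y n\<bar> \<le> \<epsilon>" if "m \<ge> N" "\<bar>y m\<bar> \<le> \<epsilon>" "n \<ge> m" for m n
      using that(3)
    proof (induction n rule: dec_induct)
      case base then show ?case using that by simp
    next
      case (step n) then show ?case using stp[of n] that by auto
    qed
    have "\<exists>m\<ge>N. \<bar>y m\<bar> \<le> \<epsilon>"
    proof (rule ccontr)
      assume "\<not> ?thesis"
      hence big: "\<And>n. n \<ge> N \<Longrightarrow> \<bar>y n\<bar> > \<epsilon>" by force
      define B where "B = max \<bar>y N\<bar> \<epsilon>"
      define S where "S = {x. \<eta> \<le> \<bar>x\<bar> \<and> \<bar>x\<bar> \<le> B + \<eta>}"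
      define mm where "mm = (INF x\<in>S. \<bar>g x\<bar>)"
      have mm: "mm > 0" using C3 eta unfolding mm_def S_def B_def by auto
      have gm: "\<bar>g x\<bar> \<ge> mm" if "x \<in> S" for x
        unfolding mm_def by (rule cINF_lower[OF _ that]) (auto intro: bdd_belowI[where m=0])
      have dec: "\<bar>y (Suc n)\<bar> \<le> \<bar>y n\<bar> - b n * mm" if "n \<ge> N" for n
      proof -
        have "y n + s n \<in> S" using N[OF that] big[OF that] bound[OF that] eta unfolding S_def B_def by auto
        hence g: "\<bar>g (y n + s n)\<bar> \<ge> mm" by (rule gm)
        have bs: "\<bar>y (Suc n)\<bar> > \<epsilon>" using big that by simp
        have bg: "b n * mm \<le> b n * \<bar>g (y n + s n)\<bar>" using g bpos by (simp add: mult_left_mono)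
        show ?thesis
        proof (cases "y n > 0")
          case True
          hence "y n > \<eta>" using big[OF that] eta by auto
          from pos[OF that this] bs have "y (Suc n) > \<epsilon>" "g (y n + s n) > 0" using eta by auto
          thus ?thesis using bg True eta unfolding rec by (simp add: abs_le_iff)
        next
          case False
          hence "y n < -\<eta>" using big[OF that] eta by auto
          from neg[OF that this] bs have "y (Suc n) < -\<epsilon>" "g (y n + s n) < 0" using eta by auto
          thus ?thesis using bg False eta unfolding rec by (simp add: abs_le_iff)
        qed
      qed
      have tot: "\<bar>y (N + k)\<bar> \<le> \<bar>y N\<bar> - mm * (\<Sum>i<k. b (N + i))" for k
      proof (induction k)
        case 0 then show ?case by simp
      next
        case (Suc k) then show ?case using dec[of "N+k"] by (simp add: algebra_simps)
      qed
      have "\<not> summable (\<lambda>i. b (i + N))" using bdiv by simp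
      hence "\<not> (\<forall>k. (\<Sum>i<k. b (i + N)) \<le> \<bar>y N\<bar> / mm)"
        using summableI_nonneg_bounded[of "\<lambda>i. b (i + N)"] bpos by blast
      then obtain k where "(\<Sum>i<k. b (N + i)) > \<bar>y N\<bar> / mm" by (auto simp: add.commute not_le)
      hence "mm * (\<Sum>i<k. b (N + i)) > \<bar>y N\<bar>" using mm by (simp add: field_simps)
      with tot[of k] show False by auto
    qed
    then obtain m where "m \<ge> N" "\<bar>y m\<bar> \<le> \<epsilon>" by blast
    with absorb show ?thesis by blast
  qed
  show ?thesis
  proof (rule LIMSEQ_I)
    fix r :: real assume "r > 0"
    then obtain M where "\<forall>n\<ge>M. \<bar>y n\<bar> \<le> r/2" using main[of "r/2"] by auto
    then show "\<exists>no. \<forall>n\<ge>no. norm (y n - 0) < r" using \<open>r>0\<close> by force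
  qed
qed



theorem mainTheorem5:
  fixes M :: "'a measure" and F :: "nat \<Rightarrow> 'a measure"
    and g :: "real \<Rightarrow> real" and X U :: "nat \<Rightarrow> 'a \<Rightarrow> real" and \<alpha> :: "nat \<Rightarrow> real"
  assumes "prob_space M"
    and g0: "g 0 = 0"
    and C1: "\<exists>c d. c \<ge> 0 \<and> d \<ge> 0 \<and> (\<forall>x. \<bar>g x\<bar> \<le> c + d * \<bar>x\<bar>)"
    and C2: "\<forall>x. (x < 0 \<longrightarrow> g x < 0) \<and> (x > 0 \<longrightarrow> g x > 0)"
    and C3: "\<forall>\<delta>1 \<delta>2. 0 < \<delta>1 \<longrightarrow> \<delta>1 < \<delta>2 \<longrightarrow>
               (INF x\<in>{x. \<delta>1 \<le> \<bar>x\<bar> \<and> \<bar>x\<bar> \<le> \<delta>2}. \<bar>g x\<bar>) > 0"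
    and filt: "filtration (space M) F"
    and sub: "\<forall>n. subalgebra M (F n)"
    and X0_meas: "X 0 \<in> borel_measurable (F 0)"
    and X0_int: "integrable M (X 0)"
    and X_rec: "\<forall>n \<omega>. X (Suc n) \<omega> = X n \<omega> - \<alpha> (Suc n) * U (Suc n) \<omega>"
    and U_meas: "\<forall>n. U (Suc n) \<in> borel_measurable (F (Suc n))"
    and U_int: "\<forall>n. integrable M (U (Suc n))"
    and \<alpha>_nonneg: "\<forall>n. \<alpha> (Suc n) \<ge> 0"
    and \<alpha>_lim: "(\<lambda>n. \<alpha> (Suc n)) \<longlonglongrightarrow> 0"
    and \<alpha>_div: "\<not> summable (\<lambda>n. \<alpha> (Suc n))"
    and cond: "\<forall>n. AE \<omega> in M. real_cond_exp M (F n) (U (Suc n)) \<omega> = g (X n \<omega>)"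
    and noise: "AE \<omega> in M. summable (\<lambda>i. \<alpha> (Suc i) *
                 (U (Suc i) \<omega> - real_cond_exp M (F i) (U (Suc i)) \<omega>))"
  shows "AE \<omega> in M. (\<lambda>n. X n \<omega>) \<longlonglongrightarrow> 0"
  proof -
  obtain c d where cd: "c \<ge> 0" "d \<ge> 0" and gb: "\<And>x. \<bar>g x\<bar> \<le> c + d * \<bar>x\<bar>" using C1 by blast
  define ce where "ce = (\<lambda>i. real_cond_exp M (F i) (U (Suc i)))"
  have "AE \<omega> in M. (\<forall>n. ce n \<omega> = g (X n \<omega>)) \<and> summable (\<lambda>i. \<alpha> (Suc i) * (U (Suc i) \<omega> - ce i \<omega>))"
    using cond noise unfolding ce_def by (simp add: AE_all_countable)
  then show ?thesis
  proof (rule AE_mp[OF _ AE_I2], intro impI)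
    fix \<omega> assume H: "(\<forall>n. ce n \<omega> = g (X n \<omega>)) \<and> summable (\<lambda>i. \<alpha> (Suc i) * (U (Suc i) \<omega> - ce i \<omega>))"
    define e where "e = (\<lambda>i. \<alpha> (Suc i) * (U (Suc i) \<omega> - ce i \<omega>))"
    have se: "summable e" using H unfolding e_def by blast
    define R where "R = (\<lambda>n. \<Sum>i. e (i + n))"
    have R0: "R \<longlonglongrightarrow> 0" unfolding R_def by (rule suminf_exist_split2[OF se])
    have Rs: "R n = e n + R (Suc n)" for n
    proof -
      have "summable (\<lambda>i. e (i + n))" using se by simp
      from suminf_split_head[OF this] show ?thesis unfolding R_def by simp
    qed
    define y where "y = (\<lambda>n. X n \<omega> - R n)"
    have rec: "y (Suc n) = y n - \<alpha> (Suc n) * g (y n + R n)" for n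
    proof -
      have "X (Suc n) \<omega> = X n \<omega> - \<alpha> (Suc n) * g (X n \<omega>) - e n"
        using X_rec H unfolding e_def by (simp add: algebra_simps)
      then show ?thesis unfolding y_def using Rs[of n] by simp
    qed
    have "y \<longlonglongrightarrow> 0"
      by (rule det_lemma[OF cd gb C2 C3 rec R0 \<alpha>_lim]) (use \<alpha>_nonneg \<alpha>_div in auto)
    hence "(\<lambda>n. y n + R n) \<longlonglongrightarrow> 0 + 0" using R0 by (intro tendsto_add)
    thus "(\<lambda>n. X n \<omega>) \<longlonglongrightarrow> 0" unfolding y_def by simp
  qed
qed

end
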